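(* Let $n\ge1$, let $U_1,\dots,U_n$ be independent Uniform$[0,1]$ random variables, and let $N_t=|\{i:U_i\le t\}|$ for $t\in[0,1]$. Let $t_0=n^{-1/2}$. Then for every $x>1$, $$\mathbb P\left[\sup_{t\in[0,t_0]}\frac{N_t}{1+nt}\ge x\right]\le\exp\!\left(n^{-1/2}+\tfrac12 n^{-1}\right)\exp(-\gamma_x x),$$ where $\gamma_x$ is the positive root $\gamma$ of $e^{\gamma}=1+\gamma x$. *)

theory Defs
  imports "HOL-Probability.Probability"
begin

definition unif_cube :: "nat \<Rightarrow> (nat \<Rightarrow> real) measure" where
  "unif_cube n = PiM {..<n} (\<lambda>_. uniform_measure lborel {0..1::real})"

definition Ncount :: "nat \<Rightarrow> real \<Rightarrow> (nat \<Rightarrow> real) \<Rightarrow> nat" where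
  "Ncount n t U = card {i\<in>{..<n}. U i \<le> t}"

definition gamma_root :: "real \<Rightarrow> real" where
  "gamma_root x = (THE g. g > 0 \<and> exp g = 1 + g * x)"

end

theory Submission
  imports Defs
begin


lemma one_minus_le_exp2:
  fixes t :: real assumes "0 \<le> t"
  shows "1 - t \<le> exp (- t - t^2/2)"
proof -
  let ?h = "\<lambda>t::real. exp (- t - t^2/2) - (1 - t)"
  have "?h 0 \<le> ?h t"
  proof (rule DERIV_nonneg_imp_nondecreasing[OF assms])
    fix y :: real assume y: "0 \<le> y" "y \<le> t"
    have d: "DERIV ?h y :> exp (- y - y^2/2) * (- 1 - y) + 1"
      by (auto intro!: derivative_eq_intros simp: power2_eq_square algebra_simps)
    have "1 + y \<le> exp y" by (rule exp_ge_add_one_self)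
    also have "\<dots> \<le> exp (y + y^2/2)" using y by simp
    finally have "(1+y) * exp (- y - y^2/2) \<le> exp (y + y^2/2) * exp (- y - y^2/2)"
      by (rule mult_right_mono) simp
    also have "\<dots> = 1" by (simp add: exp_add[symmetric])
    finally have "exp (- y - y^2/2) * (- 1 - y) + 1 \<ge> 0" by (simp add: algebra_simps)
    with d show "\<exists>z. DERIV ?h y :> z \<and> 0 \<le> z" by blast
  qed
  then show ?thesis by simp
qed

lemma sum_lessThan_real: "(\<Sum>i<j. real i) = real j * (real j - 1) / 2"
  by (induction j) (auto simp: algebra_simps)

lemma ff_bound:
  fixes n j :: nat assumes "j \<le> n" "n \<ge> 1"
  shows "(\<Prod>i<j. real (n - i)) / real n ^ j \<le> exp (- (real j * (real j - 1) / (2 * real n)))"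
proof -
  have "(\<Prod>i<j. real (n - i)) / real n ^ j = (\<Prod>i<j. 1 - real i / real n)"
  proof -
    have "(\<Prod>i<j. real (n - i) / real n) = (\<Prod>i<j. real (n - i)) / real n ^ j"
      by (simp add: prod_dividef)
    moreover have "(\<Prod>i<j. real (n - i) / real n) = (\<Prod>i<j. 1 - real i / real n)"
      using assms by (intro prod.cong) (auto simp: of_nat_diff field_simps)
    ultimately show ?thesis by simp
  qed
  also have "\<dots> \<le> (\<Prod>i<j. exp (- (real i / real n)))"
  proof (rule prod_mono)
    fix i assume "i \<in> {..<j}"
    then have "real i / real n \<le> 1" using assms by (auto simp: field_simps)
    then show "0 \<le> 1 - real i / real n \<and> 1 - real i / real n \<le> exp (- (real i / real n))"
      using exp_ge_add_one_self[of "- (real i / real n)"] by simp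
  qed
  also have "\<dots> = exp (- (\<Sum>i<j. real i) / real n)"
    by (simp add: exp_sum[symmetric] sum_divide_distrib sum_negf)
  also have "\<dots> = exp (- (real j * (real j - 1) / (2 * real n)))"
    by (simp add: sum_lessThan_real)
  finally show ?thesis .
qed

lemma phi_bound:
  fixes N J t :: real
  assumes N: "N \<ge> 1" and t: "0 \<le> t" "t \<le> 1 / sqrt N"
  shows "- (N - J) * (t + t^2/2) + N * t - J * (J - 1) / (2 * N) \<le> 1 / sqrt N + 1 / (2 * N)"
proof -
  define A where "A = t + t^2/2 + 1/(2*N)"
  have Npos: "N > 0" using N by simp
  have e: "- (N - J) * (t + t^2/2) + N * t - J * (J - 1) / (2 * N) = J * A - J^2/(2*N) - N * t^2/2"
    using Npos by (simp add: A_def field_simps power2_eq_square)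
  have "N * A^2/2 - N*t^2/2 - (J * A - J^2/(2*N) - N * t^2/2) = (N*A - J)^2/(2*N)"
    using Npos by (simp add: field_simps power2_eq_square)
  also have "\<dots> \<ge> 0" using Npos by simp
  finally have 1: "J * A - J^2/(2*N) - N * t^2/2 \<le> N * (A - t) * (A + t) / 2"
    by (simp add: algebra_simps power2_eq_square)
  have sq: "sqrt N > 0" "sqrt N ^ 2 = N" using Npos by auto
  have "t^2 \<le> (1 / sqrt N)^2" using t by (intro power_mono) auto
  then have t2: "t^2 \<le> 1 / N" using sq by (simp add: power_divide)
  have Amt: "A - t \<le> 1 / N" "0 \<le> A - t" using t2 Npos by (auto simp: A_def field_simps)
  have Apt: "A + t \<le> 2 / sqrt N + 1 / N" "0 \<le> A + t" using t t2 Amt unfolding A_def by auto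
  have "N * (A - t) * (A + t) \<le> N * (1 / N) * (2 / sqrt N + 1 / N)"
    using Amt Apt Npos by (intro mult_mono) (auto intro: mult_left_mono)
  also have "\<dots> = 2 * (1 / sqrt N + 1 / (2 * N))" using Npos by (simp add: field_simps)
  finally have 3: "N * (A - t) * (A + t) / 2 \<le> 1 / sqrt N + 1 / (2 * N)" by simp
  show ?thesis unfolding e using 1 3 by linarith
qed

definition ffn :: "nat \<Rightarrow> nat \<Rightarrow> real" where "ffn n j = (\<Prod>i<j. real (n - i))"

lemma ffn_pos: "j \<le> n \<Longrightarrow> ffn n j > 0"
  unfolding ffn_def by (intro prod_pos) auto

lemma cross_bound:
  fixes n j :: nat and t x g :: real
  assumes n: "n \<ge> 1" and j: "j \<le> n" and t: "0 \<le> t" "t \<le> 1 / sqrt n" "t < 1"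
    and g: "g > 0" and c: "x * (1 + n * t) \<le> j"
  shows "exp (g * x - 1 / sqrt n - 1 / (2 * n)) * (1 - t) ^ (n - j)
         \<le> exp (g * j - (1 + g * x) * n * t) * real n ^ j / ffn n j"
proof -
  define c0 where "c0 = 1 / sqrt n + 1 / (2 * real n)"
  have Npos: "real n > 0" using n by simp
  have ff: "ffn n j > 0" using ffn_pos[OF j] .
  have P: "(1 - t) ^ (n - j) \<le> exp (- real (n - j) * (t + t^2/2))"
  proof -
    have "(1 - t) ^ (n - j) \<le> exp (- t - t^2/2) ^ (n - j)"
      using t one_minus_le_exp2[OF t(1)] by (intro power_mono) auto
    also have "\<dots> = exp (- real (n - j) * (t + t^2/2))"
      by (simp add: exp_of_nat_mult[symmetric] algebra_simps)
    finally show ?thesis .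
  qed
  have F: "ffn n j / real n ^ j \<le> exp (- (real j * (real j - 1) / (2 * real n)))"
    unfolding ffn_def using ff_bound[OF j n] .
  have phi: "- real (n - j) * (t + t^2/2) + real n * t - real j * (real j - 1) / (2 * real n) \<le> c0"
    unfolding c0_def using phi_bound[of "real n" t "real j"] n t j by (simp add: of_nat_diff)
  have "exp (g * x - c0) * (1 - t) ^ (n - j) * (ffn n j / real n ^ j)
        \<le> exp (g * x - c0) * exp (- real (n - j) * (t + t^2/2)) * exp (- (real j * (real j - 1) / (2 * real n)))"
    using P F t ff Npos by (intro mult_mono) auto
  also have "\<dots> = exp (g * x - c0 + (- real (n - j) * (t + t^2/2) - real j * (real j - 1) / (2 * real n)))"
    by (simp add: exp_add[symmetric])
  also have "\<dots> \<le> exp (g * x - real n * t)"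
    using phi by simp
  also have "\<dots> \<le> exp (g * j - (1 + g * x) * n * t)"
  proof -
    have "g * (x * (1 + n * t)) \<le> g * j" using c g by (intro mult_left_mono) auto
    then show ?thesis by (simp add: algebra_simps)
  qed
  finally have "exp (g * x - c0) * (1 - t) ^ (n - j) * ffn n j \<le> exp (g * j - (1 + g * x) * n * t) * real n ^ j"
    using Npos ff by (simp add: field_simps)
  then show ?thesis using ff unfolding c0_def by (simp add: field_simps)
qed



lemma exp_gt_add_one: fixes y :: real assumes "y \<noteq> 0" shows "1 + y < exp y"
proof (cases "1 + y/2 \<ge> 0")
  case True
  have "(1 + y/2)^2 \<le> exp (y/2) ^ 2" using True exp_ge_add_one_self[of "y/2"] by (intro power_mono) auto
  also have "\<dots> = exp y" by (simp add: exp_double[symmetric] power2_eq_square exp_add[symmetric])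
  moreover have "1 + y < (1 + y/2)^2"
  proof -
    have "0 < y * y" using assms by (cases "y > 0") (auto simp: zero_less_mult_iff)
    then show ?thesis by (simp add: power2_eq_square algebra_simps)
  qed
  ultimately show ?thesis by simp
next
  case False then have "1 + y < 0" by simp
  then show ?thesis using exp_gt_zero[of y] by linarith
qed

lemma gamma_root_prop:
  fixes x :: real assumes x: "x > 1"
  shows "gamma_root x > 0 \<and> exp (gamma_root x) = 1 + gamma_root x * x"
proof -
  define P where "P = (\<lambda>g. g > 0 \<and> exp g = 1 + g * x)"
  define d where "d = min 1 ((x - 1)/2)"
  have d: "0 < d" "d \<le> 1" "d < x - 1" using x by (auto simp: d_def min_def)
  have "exp d \<le> 1 + d + d^2" using exp_bound[of d] d by simp
  also have "\<dots> \<le> 1 + d * x"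
  proof -
    have "d * d \<le> d * (x - 1)" using d by (intro mult_left_mono) auto
    then show ?thesis by (simp add: power2_eq_square algebra_simps)
  qed
  finally have h1: "exp d - d * x \<le> 1" by simp
  have "(1 + 2*x)^2 \<le> exp (2*x) ^ 2" using x exp_ge_add_one_self[of "2*x"] by (intro power_mono) auto
  also have "\<dots> = exp (4*x)" by (simp add: power2_eq_square exp_add[symmetric])
  finally have "1 + 4*x + 4*x*x \<le> exp (4*x)" by (simp add: power2_eq_square algebra_simps)
  then have h2: "1 \<le> exp (4*x) - 4*x * x" using x by linarith
  have "d \<le> 4*x" using d x by simp
  have "continuous_on {d..4 * x} (\<lambda>g. exp g - g * x)" by (intro continuous_intros)
  from IVT'[of "\<lambda>g. exp g - g * x" d 1 "4*x", OF h1 h2 \<open>d \<le> 4*x\<close> this]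
  obtain g where g: "d \<le> g" "exp g - g * x = 1"
    by blast
  have Pg: "P g" using g d by (auto simp: P_def)
  have uniq: "h = g" if "P h" for h
  proof -
    have key: False if a: "P g1" "P g2" "g1 < g2" for g1 g2
    proof -
      define e where "e = g2 - g1"
      have e: "e > 0" using a by (simp add: e_def)
      have "exp g1 * (1 + e) < exp g1 * exp e" using exp_gt_add_one[of e] e by simp
      also have "\<dots> = exp g2" by (simp add: e_def exp_add[symmetric])
      finally have "(1 + g1 * x) * (1 + e) < 1 + g2 * x" using a by (simp add: P_def)
      then have "e * (1 + g1 * x) < e * x" by (simp add: e_def algebra_simps)
      then have lt: "1 + g1 * x < x" using e by simp
      have "1 - g1 \<le> exp (- g1)" using exp_ge_add_one_self[of "-g1"] by simp
      then have "(1 - g1) * exp g1 \<le> 1" by (simp add: exp_minus field_simps)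
      then have "(1 - g1) * (1 + g1 * x) \<le> 1" using a by (simp add: P_def)
      moreover have "g1 * (1 - g1) * x > g1" 
      proof -
        have "(1 - g1) * x > 1" using lt by (simp add: algebra_simps)
        then have "g1 * 1 < g1 * ((1 - g1) * x)" using a by (intro mult_strict_left_mono) (auto simp: P_def)
        then show ?thesis by (simp add: algebra_simps)
      qed
      ultimately show False by (simp add: algebra_simps)
    qed
    show ?thesis
    proof (cases h g rule: linorder_cases)
      case less then show ?thesis using key[of h g] that Pg by blast
    next
      case equal then show ?thesis .
    next
      case greater then show ?thesis using key[of g h] that Pg by blast
    qed
  qed
  have "gamma_root x = g" unfolding gamma_root_def
  proof (rule the_equality)
    show "g > 0 \<and> exp g = 1 + g * x" using Pg unfolding P_def .
  next
    fix h assume "h > 0 \<and> exp h = 1 + h * x"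
    then have "P h" unfolding P_def .
    then show "h = g" by (rule uniq)
  qed
  then show ?thesis using Pg by (simp add: P_def)
qed



definition mu :: "real measure" where "mu = uniform_measure lborel {0..1}"

lemma prob_space_mu: "prob_space mu"
  unfolding mu_def by (rule prob_space_uniform_measure) auto

interpretation MU: prob_space mu by (rule prob_space_mu)
interpretation PS: product_sigma_finite "\<lambda>_::nat. mu"
  unfolding product_sigma_finite_def using MU.sigma_finite_measure_axioms by simp

lemma sets_mu[simp, measurable_cong]: "sets mu = sets borel"
  by (simp add: mu_def)
lemma space_mu[simp]: "space mu = UNIV"
  by (simp add: mu_def)

definition cnt :: "nat set \<Rightarrow> (nat \<Rightarrow> real) \<Rightarrow> real \<Rightarrow> nat" where
  "cnt I z t = card {i\<in>I. z i \<le> t}"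

definition EvP :: "nat \<Rightarrow> real \<Rightarrow> nat set \<Rightarrow> real \<Rightarrow> nat \<Rightarrow> (nat \<Rightarrow> real) \<Rightarrow> bool" where
  "EvP n x I s j z \<longleftrightarrow> (\<forall>k\<in>I. s \<le> z k) \<and>
     (\<exists>t\<in>{s..1 / sqrt n}. x * (1 + real n * t) \<le> real j + real (cnt I z t))"

lemma cnt_real: "finite I \<Longrightarrow> real (cnt I z t) = (\<Sum>i\<in>I. if z i \<le> t then 1 else 0)"
proof -
  assume I: "finite I"
  have "real (cnt I z t) = (\<Sum>i\<in>{i\<in>I. z i \<le> t}. 1)" unfolding cnt_def by simp
  also have "\<dots> = (\<Sum>i\<in>I. if z i \<le> t then 1 else 0)" using I by (rule sum.inter_filter)
  finally show ?thesis .
qed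

lemma cnt_cong: "(\<And>k. k \<in> I \<Longrightarrow> z k = z' k) \<Longrightarrow> cnt I z t = cnt I z' t"
  unfolding cnt_def by (metis (mono_tags, lifting) Collect_cong)

lemma EvP_cong: "(\<And>k. k \<in> I \<Longrightarrow> z k = z' k) \<Longrightarrow> EvP n x I s j z = EvP n x I s j z'"
  unfolding EvP_def using cnt_cong[of I z z'] by auto

lemma EvP_alt:
  assumes I: "finite I" and x: "x > 0"
  shows "EvP n x I s j z \<longleftrightarrow> (\<forall>k\<in>I. s \<le> z k) \<and>
     ((s \<le> 1 / sqrt n \<and> x * (1 + real n * s) \<le> real j + real (cnt I z s)) \<or>
      (\<exists>k\<in>I. s \<le> z k \<and> z k \<le> 1 / sqrt n \<and> x * (1 + real n * z k) \<le> real j + real (cnt I z (z k))))"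
    (is "?L \<longleftrightarrow> ?A \<and> (?B \<or> ?C)")
proof
  assume ?L
  then obtain t where A: ?A and t: "s \<le> t" "t \<le> 1 / sqrt n" and c: "x * (1 + real n * t) \<le> real j + real (cnt I z t)"
    unfolding EvP_def by auto
  have mono: "x * (1 + real n * u) \<le> x * (1 + real n * t)" if "u \<le> t" for u
    using that x by (intro mult_left_mono) (auto intro: mult_left_mono)
  define K where "K = {k\<in>I. s \<le> z k \<and> z k \<le> t}"
  show "?A \<and> (?B \<or> ?C)"
  proof (cases "K = {}")
    case True
    have "{i\<in>I. z i \<le> t} = {}" using True A unfolding K_def by auto
    moreover have "{i\<in>I. z i \<le> s} \<subseteq> {i\<in>I. z i \<le> t}" using t by auto
    ultimately have e1: "{i\<in>I. z i \<le> s} = {}" by blast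
    have "{i\<in>I. z i \<le> s} = {i\<in>I. z i \<le> t}" using e1 \<open>{i\<in>I. z i \<le> t} = {}\<close> by blast
    then have "cnt I z s = cnt I z t" unfolding cnt_def by (rule arg_cong)
    then show ?thesis using A t c mono[of s] by auto
  next
    case False
    have fK: "finite K" using I unfolding K_def by auto
    obtain k where k: "k \<in> K" "\<And>k'. k' \<in> K \<Longrightarrow> z k' \<le> z k"
      using Max_in[of "z ` K"] fK False Max_ge[of "z ` K"] by (metis (no_types, lifting) finite_imageI image_iff image_is_empty)
    have "{i\<in>I. z i \<le> t} = {i\<in>I. z i \<le> z k}"
      using k A unfolding K_def by force
    then have "cnt I z t = cnt I z (z k)" unfolding cnt_def by simp
    have "?C" using A t c mono[of "z k"] k \<open>cnt I z t = cnt I z (z k)\<close> unfolding K_def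
      by (intro bexI[of _ k]) auto
    then show ?thesis using A by blast
  qed
next
  assume "?A \<and> (?B \<or> ?C)"
  then show ?L unfolding EvP_def by auto
qed

lemma pred_le_aux: assumes [measurable]: "g \<in> borel_measurable M" "h \<in> borel_measurable M"
  shows "Measurable.pred M (\<lambda>z. g z \<le> (h z::real))" by measurable

lemma pred_EvP:
  assumes I: "finite I" "J \<subseteq> I" and x: "x > 0" and f: "f \<in> borel_measurable (PiM I (\<lambda>_. mu))"
  shows "Measurable.pred (PiM I (\<lambda>_. mu)) (\<lambda>z. EvP n x J (f z) j z)"
proof -
  let ?B = "PiM I (\<lambda>_. borel :: real measure)"
  have eqs: "sets (PiM I (\<lambda>_. mu)) = sets ?B" by (intro sets_PiM_cong) auto
  have f'[measurable]: "f \<in> borel_measurable ?B" using f measurable_cong_sets[OF eqs refl] by auto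
  have J: "finite J" using I finite_subset by auto
  have comp[measurable]: "(\<lambda>z. z k) \<in> borel_measurable ?B" for k
  proof (cases "k \<in> I")
    case True then show ?thesis using measurable_component_singleton[of k I "\<lambda>_. borel"] by auto
  next
    case False
    have "(\<lambda>z. undefined) \<in> borel_measurable ?B" by simp
    then show ?thesis by (rule measurable_cong[THEN iffD1, rotated]) (use False in \<open>auto simp: space_PiM PiE_def extensional_def\<close>)
  qed
  have c1[measurable]: "(\<lambda>z. real j + real (cnt J z (f z))) \<in> borel_measurable ?B"
    unfolding cnt_real[OF J] by measurable
  have c2: "(\<lambda>z. real j + real (cnt J z (z k))) \<in> borel_measurable ?B" for k
    unfolding cnt_real[OF J] by measurable
  have c3: "(\<lambda>z. x * (1 + real n * z k)) \<in> borel_measurable ?B" for k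
    by measurable
  have c4: "(\<lambda>z. x * (1 + real n * f z)) \<in> borel_measurable ?B"
    by measurable
  have "Measurable.pred ?B (\<lambda>z. EvP n x J (f z) j z)" unfolding EvP_alt[OF J x]
    by (intro pred_intros_logic pred_intros_finite[OF J] pred_le_aux f' comp c1 c2 c3 c4 measurable_const) auto
  then show ?thesis using measurable_cong_sets[OF eqs refl] by auto
qed



lemma mu_atLeast: assumes "0 \<le> s" "s \<le> 1" shows "emeasure mu {s..} = ennreal (1 - s)"
proof -
  have "{0..1::real} \<inter> {s..} = {s..1}" using assms by auto
  then show ?thesis unfolding mu_def using assms by (simp add: emeasure_uniform_measure divide_ennreal_def)
qed

lemma cube_measure:
  fixes I :: "nat set"
  assumes I: "finite I" and s: "0 \<le> s" "s \<le> 1"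
  shows "emeasure (PiM I (\<lambda>_. mu)) {z \<in> space (PiM I (\<lambda>_. mu)). \<forall>k\<in>I. s \<le> z k} = ennreal ((1 - s) ^ card I)"
proof -
  have "{z \<in> space (PiM I (\<lambda>_. mu)). \<forall>k\<in>I. s \<le> z k} = PiE I (\<lambda>_. {s..})"
    by (auto simp: space_PiM PiE_def)
  then have "emeasure (PiM I (\<lambda>_. mu)) {z \<in> space (PiM I (\<lambda>_. mu)). \<forall>k\<in>I. s \<le> z k}
      = (\<Prod>i\<in>I. emeasure mu {s..})" using PS.emeasure_PiM[OF I] by simp
  also have "\<dots> = ennreal ((1 - s) ^ card I)" using mu_atLeast[OF s] s
    by (simp add: prod_ennreal ennreal_power)
  finally show ?thesis .
qed

lemma exp_integral_mu:
  fixes C c s t0 :: real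
  assumes C: "C \<ge> 0" and c: "c > 0" and s: "0 \<le> s" "s \<le> t0"
  shows "(\<integral>\<^sup>+ y. indicator {s..t0} y * ennreal (C * exp (- c * y)) \<partial>mu) \<le> ennreal (C * exp (- c * s) / c)"
proof -
  have "(\<integral>\<^sup>+ y. indicator {s..t0} y * ennreal (C * exp (- c * y)) \<partial>mu)
      = (\<integral>\<^sup>+ y. indicator {s..t0} y * ennreal (C * exp (- c * y)) * indicator {0..1} y \<partial>lborel) / emeasure lborel {0..1::real}"
    unfolding mu_def by (rule nn_integral_uniform_measure) auto
  also have "\<dots> = (\<integral>\<^sup>+ y. indicator {s..t0} y * ennreal (C * exp (- c * y)) * indicator {0..1} y \<partial>lborel)"
    by (simp add: divide_ennreal_def)
  also have "\<dots> \<le> (\<integral>\<^sup>+ y. ennreal (C * exp (- c * y)) * indicator {s..t0} y \<partial>lborel)"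
    by (intro nn_integral_mono) (auto split: split_indicator)
  also have "\<dots> = ennreal (- C * exp (- c * t0) / c - (- C * exp (- c * s) / c))"
  proof (rule nn_integral_has_integral_lebesgue')
    show "\<And>y. y \<in> {s..t0} \<Longrightarrow> 0 \<le> C * exp (- c * y)" using C by simp
    have "((\<lambda>y. C * exp (- c * y)) has_integral (- C * exp (- c * t0) / c - (- C * exp (- c * s) / c))) {s..t0}"
      apply (rule fundamental_theorem_of_calculus[OF s(2)])
      using c by (auto intro!: derivative_eq_intros simp: has_real_derivative_iff_has_vector_derivative[symmetric] field_simps)
    then show "((\<lambda>y. C * exp (- c * y)) has_integral (- C * exp (- c * t0) / c - (- C * exp (- c * s) / c))) {s..t0}" .
  qed
  also have "\<dots> \<le> ennreal (C * exp (- c * s) / c)"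
    using C c by (intro ennreal_leI) (simp add: field_simps)
  finally show ?thesis .
qed



definition Gf :: "nat \<Rightarrow> real \<Rightarrow> real \<Rightarrow> real \<Rightarrow> nat \<Rightarrow> real" where
  "Gf n x g t j = exp (g * j - (1 + g * x) * n * t) * real n ^ j / ffn n j"
definition Lc :: "nat \<Rightarrow> real \<Rightarrow> real \<Rightarrow> real" where
  "Lc n x g = exp (g * x - 1 / sqrt n - 1 / (2 * n))"

lemma cube_sets:
  fixes I :: "nat set" assumes "finite I"
  shows "{z \<in> space (PiM I (\<lambda>_. mu)). \<forall>k\<in>I. s \<le> z k} \<in> sets (PiM I (\<lambda>_. mu))"
proof -
  have "{z \<in> space (PiM I (\<lambda>_. mu)). \<forall>k\<in>I. s \<le> z k} = PiE I (\<lambda>_. {s..})"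
    by (auto simp: space_PiM PiE_def)
  then show ?thesis using assms by (auto intro!: sets_PiM_I_finite)
qed

lemma main_ind:
  fixes I :: "nat set"
  assumes n: "n \<ge> 1" and x: "x > 1" and g: "g > 0" "exp g = 1 + g * x"
    and I: "finite I" "card I \<le> n" and s: "0 \<le> s"
  shows "emeasure (PiM I (\<lambda>_. mu)) {z \<in> space (PiM I (\<lambda>_. mu)). EvP n x I s (n - card I) z}
         \<le> ennreal (Gf n x g s (n - card I) / Lc n x g)"
  using I s
proof (induction "card I" arbitrary: I s rule: less_induct)
  case less
  have IH: "\<And>J y. card J < card I \<Longrightarrow> finite J \<Longrightarrow> card J \<le> n \<Longrightarrow> 0 \<le> y \<Longrightarrow>
    emeasure (PiM J (\<lambda>_. mu)) {z \<in> space (PiM J (\<lambda>_. mu)). EvP n x J y (n - card J) z}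
         \<le> ennreal (Gf n x g y (n - card J) / Lc n x g)"
    using less(1) by blast
  have fI: "finite I" and cI: "card I \<le> n" and s: "0 \<le> s" using less by auto
  define M where "M = PiM I (\<lambda>_. mu)"
  define j where "j = n - card I"
  define t0 where "t0 = 1 / sqrt n"
  define L where "L = Lc n x g"
  define E where "E = {z \<in> space M. EvP n x I s j z}"
  have Lpos: "L > 0" by (simp add: Lc_def L_def)
  have jn: "j \<le> n" by (simp add: j_def)
  have xpos: "x > 0" using x by simp
  have mono: "x * (1 + real n * u) \<le> x * (1 + real n * t)" if "u \<le> t" for u t
    using that xpos by (intro mult_left_mono) (auto intro: mult_left_mono)
  have goal: "emeasure M E \<le> ennreal (Gf n x g s j / L)"
  proof (cases "s \<le> t0")
    case False
    then have "E = {}" unfolding E_def EvP_def t0_def by auto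
    then show ?thesis by simp
  next
    case st0: True
    show ?thesis
    proof (cases "x * (1 + n * s) \<le> j")
      case True
      have "x * (1 + n * s) \<le> n" using True jn by linarith
      moreover have "1 + n * s < x * (1 + n * s)"
      proof -
        have "0 < 1 + real n * s" using s by (simp add: add_pos_nonneg)
        from mult_strict_right_mono[OF x this] show ?thesis by simp
      qed
      ultimately have "1 + n * s < n" by linarith
      then have s1: "s < 1"
      proof -
        assume h: "1 + n * s < n"
        show "s < 1"
        proof (rule ccontr)
          assume "\<not> s < 1"
          then have "real n * 1 \<le> real n * s" by (intro mult_left_mono) auto
          then show False using h by simp
        qed
      qed
      have "E \<subseteq> {z \<in> space M. \<forall>k\<in>I. s \<le> z k}" unfolding E_def EvP_def by auto
      then have "emeasure M E \<le> emeasure M {z \<in> space M. \<forall>k\<in>I. s \<le> z k}"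
        by (rule emeasure_mono) (simp add: M_def cube_sets[OF fI])
      also have "\<dots> = ennreal ((1 - s) ^ card I)" unfolding M_def using cube_measure[OF fI s] s1 by simp
      also have "\<dots> \<le> ennreal (Gf n x g s j / L)"
      proof (rule ennreal_leI)
        have "L * (1 - s) ^ (n - j) \<le> Gf n x g s j"
          unfolding L_def Lc_def Gf_def
          using cross_bound[OF n jn s _ s1 g(1) True] st0 by (simp add: t0_def)
        moreover have "n - j = card I" using cI by (simp add: j_def)
        ultimately show "(1 - s) ^ card I \<le> Gf n x g s j / L" using Lpos by (simp add: field_simps)
      qed
      finally show ?thesis .
    next
      case False
      define Pc where "Pc i = {z \<in> space M. s \<le> z i \<and> z i \<le> t0 \<and> EvP n x (I - {i}) (z i) (j+1) z}" for i
      have sub: "E \<subseteq> (\<Union>i\<in>I. Pc i)"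
      proof
        fix z assume "z \<in> E"
        then have zs: "z \<in> space M" and A: "\<forall>k\<in>I. s \<le> z k"
          and "\<exists>t\<in>{s..t0}. x * (1 + real n * t) \<le> real j + real (cnt I z t)"
          unfolding E_def EvP_def t0_def by auto
        then obtain t where t: "s \<le> t" "t \<le> t0" and ct: "x * (1 + real n * t) \<le> real j + real (cnt I z t)"
          by auto
        have "cnt I z t \<noteq> 0" using False ct mono[OF t(1)] by auto
        then have ne: "{k\<in>I. z k \<le> t} \<noteq> {}" unfolding cnt_def by (metis card.empty)
        then have Ine: "I \<noteq> {}" by auto
        obtain i where i: "i \<in> I" "\<And>k. k \<in> I \<Longrightarrow> z i \<le> z k"
          using Min_in[of "z ` I"] Min_le[of "z ` I"] fI Ine by (metis (no_types, lifting) finite_imageI image_iff image_is_empty)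
        have zit: "z i \<le> t" using ne i by force
        have "{k\<in>I. z k \<le> t} = insert i {k\<in>I - {i}. z k \<le> t}" using i zit by auto
        then have cntI: "cnt I z t = Suc (cnt (I - {i}) z t)"
          unfolding cnt_def using fI by simp
        have "EvP n x (I - {i}) (z i) (j+1) z" unfolding EvP_def
          using i zit t ct cntI by (auto intro!: bexI[of _ t] simp: t0_def)
        then have "z \<in> Pc i" using zs A i zit t unfolding Pc_def by auto
        then show "z \<in> (\<Union>i\<in>I. Pc i)" using i by blast
      qed
      have Psets: "Pc i \<in> sets M" if "i \<in> I" for i
      proof -
        have ci: "(\<lambda>z. z i) \<in> borel_measurable M"
          unfolding M_def using measurable_component_singleton[OF that, of "\<lambda>_. mu"]
          by (simp add: measurable_cong_sets[OF refl sets_mu])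
        have "Measurable.pred M (\<lambda>z. s \<le> z i \<and> z i \<le> t0 \<and> EvP n x (I - {i}) (z i) (j+1) z)"
          using pred_EvP[OF fI _ xpos ci[unfolded M_def], of "I - {i}" n "j+1"] ci
          by (intro pred_intros_logic pred_le_aux) (auto simp: M_def)
        then show ?thesis unfolding Pc_def by (simp add: pred_def)
      qed
      define c where "c = (1 + g * x) * n"
      define C1 where "C1 = exp (g * (j+1)) * real n ^ (j+1) / ffn n (j+1) / L"
      have cpos: "c > 0" unfolding c_def
      proof (rule mult_pos_pos)
        show "0 < 1 + g * x" using g x by (simp add: add_pos_pos)
        show "0 < real n" using n by simp
      qed
      have "ffn n (j+1) \<ge> 0" unfolding ffn_def by (intro prod_nonneg) auto
      then have C1pos: "C1 \<ge> 0" using Lpos unfolding C1_def by (intro divide_nonneg_nonneg) auto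
      have Pbound: "emeasure M (Pc i) \<le> ennreal (C1 * exp (- c * s) / c)" if iI: "i \<in> I" for i
      proof -
        define J where "J = I - {i}"
        have fJ: "finite J" and iJ: "i \<notin> J" and IJ: "I = insert i J" using fI iI by (auto simp: J_def)
        have c0: "card I > 0" using fI iI by (auto simp: card_gt_0_iff)
        have cJ: "card J < card I" "card J \<le> n" "n - card J = j + 1"
          using fI iI cI c0 by (auto simp: J_def j_def card_Diff_singleton)
        have ind: "indicator (Pc i) \<in> borel_measurable (PiM (insert i J) (\<lambda>_. mu))"
          using Psets[OF iI] by (simp add: M_def IJ[symmetric])
        have "emeasure M (Pc i) = (\<integral>\<^sup>+ z. indicator (Pc i) z \<partial>M)"
          using Psets[OF iI] by simp
        also have "\<dots> = (\<integral>\<^sup>+ y. (\<integral>\<^sup>+ w. indicator (Pc i) (w(i := y)) \<partial>PiM J (\<lambda>_. mu)) \<partial>mu)"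
          unfolding M_def IJ by (rule PS.product_nn_integral_insert_rev[OF fJ iJ ind])
        also have "\<dots> \<le> (\<integral>\<^sup>+ y. indicator {s..t0} y * ennreal (C1 * exp (- c * y)) \<partial>mu)"
        proof (rule nn_integral_mono)
          fix y :: real
          show "(\<integral>\<^sup>+ w. indicator (Pc i) (w(i := y)) \<partial>PiM J (\<lambda>_. mu))
                \<le> indicator {s..t0} y * ennreal (C1 * exp (- c * y))"
          proof (cases "y \<in> {s..t0}")
            case False
            then have "\<And>w. indicator (Pc i) (w(i := y)) = (0::ennreal)"
              unfolding Pc_def by (auto split: split_indicator)
            then show ?thesis by simp
          next
            case True
            define EJ where "EJ = {w \<in> space (PiM J (\<lambda>_. mu)). EvP n x J y (j + 1) w}"
            have EJs: "EJ \<in> sets (PiM J (\<lambda>_. mu))"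
              using pred_EvP[OF fJ subset_refl xpos, of "\<lambda>_. y" n "j+1"] by (simp add: EJ_def pred_def)
            have "(\<integral>\<^sup>+ w. indicator (Pc i) (w(i := y)) \<partial>PiM J (\<lambda>_. mu)) = (\<integral>\<^sup>+ w. indicator EJ w \<partial>PiM J (\<lambda>_. mu))"
            proof (rule nn_integral_cong)
              fix w assume w: "w \<in> space (PiM J (\<lambda>_. mu))"
              have wsp: "w(i := y) \<in> space M" using w unfolding M_def IJ space_PiM
                by (intro PiE_fun_upd) auto
              have "EvP n x J y (j+1) (w(i := y)) = EvP n x J y (j+1) w"
                using iJ by (intro EvP_cong) auto
              then show "indicator (Pc i) (w(i := y)) = (indicator EJ w :: ennreal)"
                using True wsp w unfolding Pc_def EJ_def J_def by (auto split: split_indicator)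
            qed
            also have "\<dots> = emeasure (PiM J (\<lambda>_. mu)) EJ" using EJs by simp
            also have "\<dots> \<le> ennreal (Gf n x g y (j+1) / Lc n x g)"
              using IH[OF cJ(1) fJ cJ(2), of y] True s cJ(3) unfolding EJ_def by simp
            also have "\<dots> = ennreal (C1 * exp (- c * y))"
            proof -
              have "exp (g * real (j + 1) - (1 + g * x) * real n * y) = exp (g * (j+1)) * exp (- c * y)"
                by (simp add: c_def exp_add[symmetric] algebra_simps)
              then show ?thesis by (simp add: Gf_def C1_def L_def field_simps)
            qed
            finally show ?thesis using True by simp
          qed
        qed
        also have "\<dots> \<le> ennreal (C1 * exp (- c * s) / c)"
          by (rule exp_integral_mu[OF C1pos cpos s st0])
        finally show ?thesis .
      qed
      have "emeasure M E \<le> emeasure M (\<Union>i\<in>I. Pc i)"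
        using sub Psets fI by (intro emeasure_mono) auto
      also have "\<dots> \<le> (\<Sum>i\<in>I. emeasure M (Pc i))"
        using Psets fI by (intro emeasure_subadditive_finite) auto
      also have "\<dots> \<le> (\<Sum>i\<in>I. ennreal (C1 * exp (- c * s) / c))"
        using Pbound by (intro sum_mono) auto
      also have "\<dots> = ennreal (card I * (C1 * exp (- c * s) / c))"
      proof -
        have v: "C1 * exp (- c * s) / c \<ge> 0" using C1pos cpos by simp
        have "(\<Sum>i\<in>I. ennreal (C1 * exp (- c * s) / c)) = ennreal (real (card I)) * ennreal (C1 * exp (- c * s) / c)"
          by (simp add: ennreal_of_nat_eq_real_of_nat)
        also have "\<dots> = ennreal (card I * (C1 * exp (- c * s) / c))"
          using ennreal_mult[OF of_nat_0_le_iff v, of "card I"] by simp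
        finally show ?thesis .
      qed
      also have "\<dots> \<le> ennreal (Gf n x g s j / L)"
      proof (rule ennreal_leI)
        show "card I * (C1 * exp (- c * s) / c) \<le> Gf n x g s j / L"
        proof (cases "card I = 0")
          case True
          then show ?thesis using Lpos ffn_pos[OF jn] by (simp add: Gf_def)
        next
          case False
          have jl: "j < n" using False cI by (simp add: j_def)
          have ff: "ffn n (j+1) = ffn n j * card I"
            using cI by (simp add: ffn_def j_def of_nat_diff)
          have fj: "ffn n j > 0" using ffn_pos[OF jn] .
          have e: "exp (g * real (j+1)) = exp (g * j) * (1 + g * x)"
          proof -
            have "exp (g * real (j+1)) = exp (g * j) * exp g" by (simp add: exp_add[symmetric] algebra_simps)
            then show ?thesis using g(2) by simp
          qed
          have e2: "exp (g * real j - (1 + g * x) * real n * s) = exp (g * j) * exp (- c * s)"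
            by (simp add: c_def exp_add[symmetric] algebra_simps)
          have alg: "\<And>m D L a N E0 X :: real. m > 0 \<Longrightarrow> D > 0 \<Longrightarrow> L > 0 \<Longrightarrow> a > 0 \<Longrightarrow> N > 0 \<Longrightarrow>
             m * ((E0 * a * (N ^ j * N) / (D * m) / L) * X / (a * N)) = E0 * N ^ j / D * X / L"
            by (simp add: field_simps)
          have apos: "1 + g * x > 0" using g x by (simp add: add_pos_pos)
          have e': "exp (g * (real j + 1)) = exp (g * j) * (1 + g * x)" using e by (simp add: add.commute)
          have C1eq: "C1 = exp (g * j) * (1 + g * x) * (real n ^ j * real n) / (ffn n j * card I) / L"
            unfolding C1_def using ff e e' by (simp add: power_Suc2)
          have "card I * (C1 * exp (- c * s) / c) = exp (g * j) * real n ^ j / ffn n j * exp (- c * s) / L"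
            unfolding C1eq c_def
            using alg[of "real (card I)" "ffn n j" L "1 + g * x" "real n" "exp (g * j)" "exp (- ((1 + g * x) * real n) * s)"]
              False Lpos fj n apos by (simp add: mult.assoc)
          also have "\<dots> = Gf n x g s j / L" unfolding Gf_def e2 by (simp add: field_simps)
          finally show ?thesis by simp
        qed
      qed
      finally show ?thesis .
    qed
  qed
  then show ?case by (simp add: M_def E_def j_def L_def)
qed



lemma sup_cross:
  fixes U :: "nat \<Rightarrow> real" and t0 x :: real
  assumes t0: "t0 \<ge> 0"
    and sup: "x \<le> (SUP t\<in>{0..t0}. real (Ncount n t U) / (1 + real n * t))"
  shows "\<exists>t\<in>{0..t0}. x * (1 + real n * t) \<le> real (Ncount n t U)"
proof (rule ccontr)
  assume "\<not> ?thesis"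
  then have lt: "\<And>t. t \<in> {0..t0} \<Longrightarrow> real (Ncount n t U) < x * (1 + real n * t)" by force
  define f where "f t = real (Ncount n t U) / (1 + real n * t)" for t
  have den: "1 + real n * t > 0" if "t \<ge> 0" for t using that by (simp add: add_pos_nonneg)
  have flt: "f t < x" if "t \<in> {0..t0}" for t
  proof -
    have "t \<ge> 0" using that by simp
    then show ?thesis using lt[OF that] den[of t] unfolding f_def by (simp add: divide_less_eq mult.commute)
  qed
  define C where "C = {t\<in>{0..t0}. t = 0 \<or> (\<exists>i<n. U i = t)}"
  have "C \<subseteq> insert 0 (U ` {..<n})" unfolding C_def by blast
  then have fC: "finite C" by (rule finite_subset) simp
  have C0: "0 \<in> C" using t0 by (simp add: C_def)
  define Mx where "Mx = Max (f ` C)"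
  have "Mx \<in> f ` C" unfolding Mx_def using fC C0 by (intro Max_in) auto
  then obtain c0 where c0: "c0 \<in> C" "Mx = f c0" by blast
  have Mx: "Mx < x" using c0 flt[of c0] unfolding C_def by simp
  have bound: "f t \<le> Mx" if t: "t \<in> {0..t0}" for t
  proof -
    define D where "D = insert 0 (U ` {i. i < n \<and> U i \<le> t})"
    have fD: "finite D" unfolding D_def by simp
    define c where "c = Max D"
    have cD: "c \<in> D" unfolding c_def using fD by (intro Max_in) (auto simp: D_def)
    have ge: "d \<le> c" if "d \<in> D" for d unfolding c_def using fD that by (rule Max_ge)
    have c0: "0 \<le> c" using ge[of 0] by (simp add: D_def)
    have ct: "c \<le> t"
    proof -
      have "c = 0 \<or> (\<exists>i. i < n \<and> U i \<le> t \<and> c = U i)" using cD unfolding D_def by blast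
      then show ?thesis using t by auto
    qed
    have cC: "c \<in> C"
    proof -
      have "c = 0 \<or> (\<exists>i<n. U i = c)" using cD unfolding D_def by blast
      then show ?thesis using c0 ct t unfolding C_def by auto
    qed
    have "{i\<in>{..<n}. U i \<le> t} = {i\<in>{..<n}. U i \<le> c}"
    proof (intro equalityI subsetI)
      fix i assume "i \<in> {i\<in>{..<n}. U i \<le> t}"
      then have "U i \<in> D" unfolding D_def by blast
      then have "U i \<le> c" by (rule ge)
      then show "i \<in> {i\<in>{..<n}. U i \<le> c}" using \<open>i \<in> {i\<in>{..<n}. U i \<le> t}\<close> by blast
    next
      fix i assume "i \<in> {i\<in>{..<n}. U i \<le> c}"
      then show "i \<in> {i\<in>{..<n}. U i \<le> t}" using ct by auto
    qed
    then have N: "Ncount n t U = Ncount n c U" by (simp add: Ncount_def)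
    have "f t \<le> f c" unfolding f_def N
      using den[OF c0] den[of t] ct c0 by (intro divide_left_mono) (auto intro: mult_left_mono mult_pos_pos)
    also have "f c \<le> Mx" unfolding Mx_def using fC cC by simp
    finally show ?thesis .
  qed
  have "(SUP t\<in>{0..t0}. f t) \<le> Mx" using t0 bound by (intro cSUP_least) auto
  then show False using sup Mx unfolding f_def by simp
qed

theorem lemmaC2:
  fixes n :: nat and x :: real
  assumes "n \<ge> 1" and "x > 1"
  shows "measure (unif_cube n)
           {U \<in> space (unif_cube n).
              (SUP t\<in>{0..1 / sqrt (real n)}. real (Ncount n t U) / (1 + real n * t)) \<ge> x}
         \<le> exp (1 / sqrt (real n) + 1 / (2 * real n)) * exp (- gamma_root x * x)"
proof -
  define g where "g = gamma_root x"
  have gp: "g > 0" "exp g = 1 + g * x" using gamma_root_prop[OF assms(2)] by (auto simp: g_def)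
  define M where "M = PiM {..<n} (\<lambda>_. mu)"
  have UM: "unif_cube n = M" by (simp add: unif_cube_def M_def mu_def)
  define S where "S = {U \<in> space M. (SUP t\<in>{0..1 / sqrt (real n)}. real (Ncount n t U) / (1 + real n * t)) \<ge> x}"
  define B0 where "B0 = PiE {..<n} (\<lambda>_. {0..1::real})"
  define Ev where "Ev = {z \<in> space M. EvP n x {..<n} 0 0 z}"
  have xpos: "x > 0" using assms by simp
  have B0s: "B0 \<in> sets M" unfolding B0_def M_def by (intro sets_PiM_I_finite) auto
  have Evs: "Ev \<in> sets M" unfolding Ev_def M_def
    using pred_EvP[of "{..<n}" "{..<n}" x "\<lambda>_. 0" n 0] xpos by (simp add: pred_def)
  have spM: "space M = PiE {..<n} (\<lambda>_. UNIV)" by (simp add: M_def space_PiM)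
  have "emeasure M (PiE {..<n} (\<lambda>_. UNIV)) = (\<Prod>i\<in>{..<n}. emeasure mu UNIV)"
    unfolding M_def by (rule PS.emeasure_PiM) auto
  then have esp: "emeasure M (space M) = 1" using MU.emeasure_space_1 spM by simp
  have "emeasure M B0 = (\<Prod>i\<in>{..<n}. emeasure mu {0..1})"
    unfolding B0_def M_def by (rule PS.emeasure_PiM) auto
  moreover have "emeasure mu {0..1} = 1" unfolding mu_def
    by (rule emeasure_uniform_measure_1) auto
  ultimately have eB0: "emeasure M B0 = 1" by simp
  have B0sub: "B0 \<subseteq> space M" unfolding B0_def spM by auto
  have eN: "emeasure M (space M - B0) = 0"
    using emeasure_compl[OF B0s] esp eB0 by simp
  have sub: "S \<subseteq> Ev \<union> (space M - B0)"
  proof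
    fix U assume U: "U \<in> S"
    have UC: "U \<in> space M \<and> (SUP t\<in>{0..1 / sqrt (real n)}. real (Ncount n t U) / (1 + real n * t)) \<ge> x"
      using CollectD[OF U[unfolded S_def]] .
    have Usp: "U \<in> space M" using UC by (rule conjunct1)
    show "U \<in> Ev \<union> (space M - B0)"
    proof (cases "U \<in> B0")
      case True
      have nonneg: "\<forall>k\<in>{..<n}. 0 \<le> U k"
      proof
        fix k assume "k \<in> {..<n}"
        with True have "U k \<in> {0..1}" unfolding B0_def by (rule PiE_mem)
        then show "0 \<le> U k" by simp
      qed
      have t0: "1 / sqrt (real n) \<ge> 0" by simp
      have Usup: "x \<le> (SUP t\<in>{0..1 / sqrt (real n)}. real (Ncount n t U) / (1 + real n * t))"
        using UC by (rule conjunct2)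
      obtain t where t: "t \<in> {0..1 / sqrt (real n)}"
        and c: "x * (1 + real n * t) \<le> real (Ncount n t U)"
        using sup_cross[OF t0 Usup] by blast
      have ce: "cnt {..<n} U t = Ncount n t U" by (simp add: cnt_def Ncount_def)
      have "\<exists>t\<in>{0..1 / sqrt (real n)}. x * (1 + real n * t) \<le> real 0 + real (cnt {..<n} U t)"
        using t c ce by (intro bexI[of _ t]) simp_all
      then have "EvP n x {..<n} 0 0 U" unfolding EvP_def using nonneg by blast
      then have "U \<in> Ev" using Usp unfolding Ev_def by blast
      then show ?thesis by blast
    next
      case False then show ?thesis using Usp by blast
    qed
  qed
  have "emeasure M S \<le> emeasure M (Ev \<union> (space M - B0))"
    by (intro emeasure_mono[OF sub] sets.Un Evs sets.Diff sets.top B0s)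
  also have "\<dots> \<le> emeasure M Ev + emeasure M (space M - B0)"
    by (intro emeasure_subadditive Evs sets.Diff sets.top B0s)
  also have "\<dots> = emeasure M Ev" using eN by simp
  also have "\<dots> \<le> ennreal (Gf n x g 0 (n - card {..<n}) / Lc n x g)"
    unfolding Ev_def M_def using main_ind[OF assms(1,2) gp, of "{..<n}" 0] by simp
  also have "\<dots> = ennreal (exp (1 / sqrt (real n) + 1 / (2 * real n)) * exp (- g * x))"
  proof -
    have G1: "Gf n x g 0 (n - card {..<n}) = 1" by (simp add: Gf_def ffn_def)
    have "1 / Lc n x g = exp (- (g * x - 1 / sqrt (real n) - 1 / (2 * real n)))"
      unfolding Lc_def exp_minus[of "g * x - 1 / sqrt (real n) - 1 / (2 * real n)"] by (simp only: inverse_eq_divide)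
    also have "\<dots> = exp (1 / sqrt (real n) + 1 / (2 * real n)) * exp (- g * x)"
      by (simp add: exp_add[symmetric])
    finally show ?thesis using G1 by simp
  qed
  finally have "emeasure M S \<le> ennreal (exp (1 / sqrt (real n) + 1 / (2 * real n)) * exp (- g * x))" .
  then have "measure M S \<le> exp (1 / sqrt (real n) + 1 / (2 * real n)) * exp (- g * x)"
    unfolding measure_def by (intro enn2real_leI) simp_all
  then show ?thesis unfolding UM S_def g_def .
qed


end
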